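(* Let $G$ be a connected bipartite graph with color classes $E$ and $V$. Let $\mathbf f,\mathbf g$ be hypertrees of $(V,E)$ with $\mathbf g=\mathbf f-\mathbf i_{\{e\}}+\mathbf i_{\{e'\}}$ for some $e\ne e'$ in $E$, and let $l$ be the line segment in $P_E$ from $\mathbf f^+$ to $\mathbf g^+$. Let $\Gamma$ be a spanning tree inducing $\mathbf f$ and suppose $\mathbf f^+$ is an interior point of the Minkowski cell $M_\Gamma$. Let $\varepsilon_1$ be the first edge of the unique path in $\Gamma$ from $e$ to $e'$. Then $l$ leaves $M_\Gamma$ through the codimension one stratum of the boundary of $M_\Gamma$ corresponding to removing $\varepsilon_1$ from $\Gamma$, i.e. at the point where $l$ exits $M_\Gamma$, the weight of $\varepsilon_1$ in the direct sum representation is $0$.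
   Context: A hypertree of $(V,E)$ is $\mathbf f\colon E\to\mathbf N$ such that some spanning tree $\Gamma$ of $G$ has degree $\mathbf f(e)+1$ at each $e\in E$ ($\Gamma$ induces $\mathbf f$). $\mathbf i_S$ is an indicator vector and $\mathbf f^+=\mathbf f+\frac1{|E|}\mathbf i_E$. For $v\in V$, $\Delta_v=\operatorname{conv}\{\mathbf i_{\{e\}}\mid ev\in G\}$ and $P_E=\sum_{v\in V}\Delta_v\subset\mathbf R^E$ (Minkowski sum). For a spanning tree $\Gamma$, $\Delta^\Gamma_v=\operatorname{conv}\{\mathbf i_{\{e\}}\mid ev\in\Gamma\}$ and $M_\Gamma=\sum_{v\in V}\Delta^\Gamma_v\subset P_E$; this sum is direct, so each point of $M_\Gamma$ is uniquely described by non-negative weights on the edges of $\Gamma$ (barycentric coordinates in each $\Delta^\Gamma_v$, summing to $1$ at each $v$), and the codimension one stratum corresponding to an edge $\varepsilon$ of $\Gamma$ is the set of points of $M_\Gamma$ where the weight of $\varepsilon$ is $0$. *)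

theory Defs
  imports "HOL-Analysis.Analysis"
begin

text \<open>A bipartite graph with colour classes E (the finite type 'e) and V (the finite
 type 'v) is a set of edges G :: ('e \<times> 'v) set. Vertices of the graph are elements of
 'e + 'v.\<close>

definition bip_adj :: "('e \<times> 'v) set \<Rightarrow> ('e + 'v) \<Rightarrow> ('e + 'v) \<Rightarrow> bool" where
  "bip_adj G a b \<longleftrightarrow> (\<exists>e v. (e, v) \<in> G \<and>
      ((a = Inl e \<and> b = Inr v) \<or> (a = Inr v \<and> b = Inl e)))"

definition bip_connected :: "('e \<times> 'v) set \<Rightarrow> bool" where
  "bip_connected G \<longleftrightarrow> (\<forall>a b. (a, b) \<in> {(x, y). bip_adj G x y}\<^sup>*)"

text \<open>Spanning tree: a connected spanning subgraph that is acyclic, i.e. every edge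
 is a bridge (removing it disconnects the subgraph).\<close>
definition spanning_tree :: "('e \<times> 'v) set \<Rightarrow> ('e \<times> 'v) set \<Rightarrow> bool" where
  "spanning_tree G \<Gamma> \<longleftrightarrow> \<Gamma> \<subseteq> G \<and> bip_connected \<Gamma> \<and>
      (\<forall>\<epsilon>\<in>\<Gamma>. \<not> bip_connected (\<Gamma> - {\<epsilon>}))"

definition deg_E :: "('e \<times> 'v) set \<Rightarrow> 'e \<Rightarrow> nat" where
  "deg_E \<Gamma> e = card {v. (e, v) \<in> \<Gamma>}"

definition induces :: "('e \<times> 'v) set \<Rightarrow> ('e \<Rightarrow> nat) \<Rightarrow> bool" where
  "induces \<Gamma> f \<longleftrightarrow> (\<forall>e. deg_E \<Gamma> e = f e + 1)"

definition hypertree :: "('e::finite \<times> 'v::finite) set \<Rightarrow> ('e \<Rightarrow> nat) \<Rightarrow> bool" where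
  "hypertree G f \<longleftrightarrow> (\<exists>\<Gamma>. spanning_tree G \<Gamma> \<and> induces \<Gamma> f)"

definition fplus :: "('e::finite \<Rightarrow> nat) \<Rightarrow> real ^ 'e" where
  "fplus f = (\<chi> e. real (f e) + 1 / real CARD('e))"

definition Delta :: "('e::finite \<times> 'v) set \<Rightarrow> 'v \<Rightarrow> (real ^ 'e) set" where
  "Delta \<Gamma> v = convex hull {axis e 1 | e. (e, v) \<in> \<Gamma>}"

definition Mcell :: "('e::finite \<times> 'v::finite) set \<Rightarrow> (real ^ 'e) set" where
  "Mcell \<Gamma> = {\<Sum>v\<in>UNIV. x v | x. \<forall>v. x v \<in> Delta \<Gamma> v}"

text \<open>Direct-sum description: w gives barycentric coordinates (weights on the edges of
 \<Gamma>, non-negative, summing to 1 at each v) representing the point x of M_\<Gamma>.\<close>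
definition weights_of :: "('e::finite \<times> 'v::finite) set \<Rightarrow> ('e \<times> 'v \<Rightarrow> real) \<Rightarrow> real ^ 'e \<Rightarrow> bool" where
  "weights_of \<Gamma> w x \<longleftrightarrow>
     (\<forall>\<epsilon>\<in>\<Gamma>. w \<epsilon> \<ge> 0) \<and> (\<forall>\<epsilon>. \<epsilon> \<notin> \<Gamma> \<longrightarrow> w \<epsilon> = 0) \<and>
     (\<forall>v. (\<Sum>e\<in>{e. (e, v) \<in> \<Gamma>}. w (e, v)) = 1) \<and>
     x = (\<Sum>v\<in>UNIV. \<Sum>e\<in>{e. (e, v) \<in> \<Gamma>}. w (e, v) *\<^sub>R axis e 1)"

definition is_path :: "('e \<times> 'v) set \<Rightarrow> ('e + 'v) list \<Rightarrow> ('e + 'v) \<Rightarrow> ('e + 'v) \<Rightarrow> bool" where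
  "is_path \<Gamma> p a b \<longleftrightarrow> p \<noteq> [] \<and> distinct p \<and> hd p = a \<and> last p = b \<and>
     (\<forall>i. Suc i < length p \<longrightarrow> bip_adj \<Gamma> (p ! i) (p ! Suc i))"

end

theory Submission
  imports Defs
begin

lemma weights_alt:
  fixes \<Gamma> :: "('e::finite \<times> 'v::finite) set"
  shows "weights_of \<Gamma> w x \<longleftrightarrow> (\<forall>\<epsilon>\<in>\<Gamma>. 0 \<le> w \<epsilon>) \<and> (\<forall>\<epsilon>. \<epsilon> \<notin> \<Gamma> \<longrightarrow> w \<epsilon> = 0) \<and>
     (\<forall>v. (\<Sum>e\<in>UNIV. w (e, v)) = 1) \<and> (\<forall>k. x $ k = (\<Sum>v\<in>UNIV. w (k, v)))"
proof -
  { assume z: "\<forall>\<epsilon>. \<epsilon> \<notin> \<Gamma> \<longrightarrow> w \<epsilon> = 0"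
    have s: "(\<Sum>e\<in>{e. (e, v) \<in> \<Gamma>}. w (e, v)) = (\<Sum>e\<in>UNIV. w (e, v))" for v
      by (rule sum.mono_neutral_left) (use z in auto)
    have inner: "(\<Sum>xa\<in>{e. (e, v) \<in> \<Gamma>}. w (xa, v) * (if k = xa then 1 else 0)) = (if (k, v) \<in> \<Gamma> then w (k, v) else 0)" for k v
    proof -
      have "(\<Sum>xa\<in>{e. (e, v) \<in> \<Gamma>}. w (xa, v) * (if k = xa then 1 else 0)) = (\<Sum>xa\<in>{e. (e, v) \<in> \<Gamma>}. if k = xa then w (k, v) else 0)"
        by (rule sum.cong) auto
      then show ?thesis by (simp add: sum.delta)
    qed
    have c: "(\<Sum>v\<in>UNIV. \<Sum>e\<in>{e. (e, v) \<in> \<Gamma>}. w (e, v) *\<^sub>R axis e (1::real)) $ k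
            = (\<Sum>v\<in>UNIV. w (k, v))" for k
    proof -
      have "(\<Sum>v\<in>UNIV. \<Sum>e\<in>{e. (e, v) \<in> \<Gamma>}. w (e, v) *\<^sub>R axis e (1::real)) $ k
          = (\<Sum>v\<in>UNIV. \<Sum>e\<in>{e. (e, v) \<in> \<Gamma>}. (if e = k then w (k, v) else 0))"
        by (simp add: sum_component axis_def inner)
      also have "\<dots> = (\<Sum>v\<in>UNIV. w (k, v))"
        by (rule sum.cong) (use z in \<open>auto simp: sum.delta\<close>)
      finally show ?thesis .
    qed
    have "weights_of \<Gamma> w x \<longleftrightarrow> (\<forall>\<epsilon>\<in>\<Gamma>. 0 \<le> w \<epsilon>) \<and>
     (\<forall>v. (\<Sum>e\<in>UNIV. w (e, v)) = 1) \<and> (\<forall>k. x $ k = (\<Sum>v\<in>UNIV. w (k, v)))"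
      unfolding weights_of_def s vec_eq_iff c using z by auto
  }
  then show ?thesis unfolding weights_of_def by blast
qed

lemma weights_Mcell:
  fixes \<Gamma> :: "('e::finite \<times> 'v::finite) set"
  assumes "weights_of \<Gamma> w x" shows "x \<in> Mcell \<Gamma>"
proof -
  let ?xv = "\<lambda>v. \<Sum>e\<in>{e. (e, v) \<in> \<Gamma>}. w (e, v) *\<^sub>R axis e (1::real)"
  have "?xv v \<in> Delta \<Gamma> v" for v
    unfolding Delta_def
  proof (rule convex_sum)
    show "convex (convex hull {axis e 1 |e. (e, v) \<in> \<Gamma>})" by (rule convex_convex_hull)
    show "(\<Sum>i\<in>{e. (e, v) \<in> \<Gamma>}. w (i, v)) = 1" using assms by (simp add: weights_of_def)
    show "0 \<le> w (i, v)" if "i \<in> {e. (e, v) \<in> \<Gamma>}" for i using assms that by (simp add: weights_of_def)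
    show "axis i 1 \<in> convex hull {axis e 1 |e. (e, v) \<in> \<Gamma>}" if "i \<in> {e. (e, v) \<in> \<Gamma>}" for i
      by (rule hull_inc) (use that in blast)
  qed simp
  moreover have "x = (\<Sum>v\<in>UNIV. ?xv v)" using assms by (simp add: weights_of_def)
  ultimately show ?thesis unfolding Mcell_def mem_Collect_eq by (intro exI[of _ ?xv]) simp
qed

lemma Mcell_weights:
  fixes \<Gamma> :: "('e::finite \<times> 'v::finite) set"
  assumes "x \<in> Mcell \<Gamma>" shows "\<exists>w. weights_of \<Gamma> w x"
proof -
  obtain xv where xv: "\<forall>v. xv v \<in> Delta \<Gamma> v" and x: "x = (\<Sum>v\<in>UNIV. xv v)"
    using assms unfolding Mcell_def by blast
  have img: "{axis e (1::real) | e. (e, v) \<in> \<Gamma>} = (\<lambda>e. axis e 1) ` {e. (e, v) \<in> \<Gamma>}" for v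
    by auto
  have inj: "inj_on (\<lambda>e. axis e (1::real)) S" for S :: "'e set"
    by (auto simp: inj_on_def axis_eq_axis)
  have "\<forall>v. \<exists>u. (\<forall>y\<in>(\<lambda>e. axis e 1) ` {e. (e, v) \<in> \<Gamma>}. 0 \<le> u y) \<and>
      sum u ((\<lambda>e. axis e 1) ` {e. (e, v) \<in> \<Gamma>}) = 1 \<and>
      (\<Sum>y\<in>(\<lambda>e. axis e 1) ` {e. (e, v) \<in> \<Gamma>}. u y *\<^sub>R y) = xv v"
    using xv unfolding Delta_def img by (subst (asm) convex_hull_finite) auto
  from choice[OF this] obtain U where U: "\<forall>v. (\<forall>y\<in>(\<lambda>e. axis e 1) ` {e. (e, v) \<in> \<Gamma>}. 0 \<le> U v y) \<and>
      sum (U v) ((\<lambda>e. axis e 1) ` {e. (e, v) \<in> \<Gamma>}) = 1 \<and>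
      (\<Sum>y\<in>(\<lambda>e. axis e 1) ` {e. (e, v) \<in> \<Gamma>}. U v y *\<^sub>R y) = xv v"
    by (elim exE)
  define w where "w = (\<lambda>(a, v). if (a, v) \<in> \<Gamma> then U v (axis a (1::real)) else 0)"
  have s1: "(\<Sum>e\<in>{e. (e, v) \<in> \<Gamma>}. w (e, v)) = 1" for v
  proof -
    have "(\<Sum>e\<in>{e. (e, v) \<in> \<Gamma>}. w (e, v)) = (\<Sum>e\<in>{e. (e, v) \<in> \<Gamma>}. U v (axis e 1))"
      by (rule sum.cong) (auto simp: w_def)
    also have "\<dots> = 1" using spec[OF U, of v] by (simp add: sum.reindex[OF inj])
    finally show ?thesis .
  qed
  have s2: "(\<Sum>e\<in>{e. (e, v) \<in> \<Gamma>}. w (e, v) *\<^sub>R axis e 1) = xv v" for v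
  proof -
    have "(\<Sum>e\<in>{e. (e, v) \<in> \<Gamma>}. w (e, v) *\<^sub>R axis e 1) = (\<Sum>e\<in>{e. (e, v) \<in> \<Gamma>}. U v (axis e 1) *\<^sub>R axis e (1::real))"
      by (rule sum.cong) (auto simp: w_def)
    also have "\<dots> = xv v" using spec[OF U, of v] by (simp add: sum.reindex[OF inj])
    finally show ?thesis .
  qed
  have "weights_of \<Gamma> w x"
    unfolding weights_of_def
  proof (intro conjI allI ballI impI)
    show "0 \<le> w \<epsilon>" if "\<epsilon> \<in> \<Gamma>" for \<epsilon>
      using that spec[OF U, of "snd \<epsilon>"] by (cases \<epsilon>) (auto simp: w_def)
    show "w \<epsilon> = 0" if "\<epsilon> \<notin> \<Gamma>" for \<epsilon> using that by (cases \<epsilon>) (auto simp: w_def)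
    show "(\<Sum>e\<in>{e. (e, v) \<in> \<Gamma>}. w (e, v)) = 1" for v by (rule s1)
    show "x = (\<Sum>v\<in>UNIV. \<Sum>e\<in>{e. (e, v) \<in> \<Gamma>}. w (e, v) *\<^sub>R axis e 1)" by (simp add: s2 x)
  qed
  then show ?thesis by blast
qed


definition Rel :: "('e \<times> 'v) set \<Rightarrow> (('e + 'v) \<times> ('e + 'v)) set" where
  "Rel G = {(x, y). bip_adj G x y}"

lemma bip_adj_sym: "bip_adj G a b \<Longrightarrow> bip_adj G b a"
  unfolding bip_adj_def by blast

lemma sym_Rel: "sym (Rel G)"
  unfolding Rel_def sym_def using bip_adj_sym by blast

lemma Rel_rtrancl_sym: "(x, y) \<in> (Rel G)\<^sup>* \<Longrightarrow> (y, x) \<in> (Rel G)\<^sup>*"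
  using sym_rtrancl[OF sym_Rel] by (metis symD)

lemma adj_avoid:
  assumes "bip_adj \<Gamma> x y" "\<not> (x = Inl a \<and> y = Inr b)" "\<not> (x = Inr b \<and> y = Inl a)"
  shows "(x, y) \<in> Rel (\<Gamma> - {(a, b)})"
  using assms unfolding Rel_def bip_adj_def by auto

lemma bridge:
  assumes "spanning_tree G \<Gamma>" "(a, b) \<in> \<Gamma>"
  shows "(Inl a, Inr b) \<notin> (Rel (\<Gamma> - {(a, b)}))\<^sup>*"
proof
  assume h: "(Inl a, Inr b) \<in> (Rel (\<Gamma> - {(a, b)}))\<^sup>*"
  have "Rel \<Gamma> \<subseteq> (Rel (\<Gamma> - {(a, b)}))\<^sup>*"
  proof
    fix z assume "z \<in> Rel \<Gamma>"
    then obtain x y where z: "z = (x, y)" "bip_adj \<Gamma> x y" unfolding Rel_def by auto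
    show "z \<in> (Rel (\<Gamma> - {(a, b)}))\<^sup>*"
    proof (cases "(x = Inl a \<and> y = Inr b) \<or> (x = Inr b \<and> y = Inl a)")
      case True then show ?thesis using h Rel_rtrancl_sym[OF h] z by auto
    next
      case False then show ?thesis using adj_avoid[OF z(2)] z by auto
    qed
  qed
  then have "(Rel \<Gamma>)\<^sup>* \<subseteq> (Rel (\<Gamma> - {(a, b)}))\<^sup>*" by (rule rtrancl_subset_rtrancl)
  moreover have "bip_connected \<Gamma>" using assms(1) by (simp add: spanning_tree_def)
  ultimately have "bip_connected (\<Gamma> - {(a, b)})"
    unfolding bip_connected_def Rel_def[symmetric] by blast
  then show False using assms unfolding spanning_tree_def by blast
qed

lemma seg:
  assumes "j \<le> k" "\<And>l. j \<le> l \<Longrightarrow> l < k \<Longrightarrow> (p ! l, p ! Suc l) \<in> R"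
  shows "(p ! j, p ! k) \<in> R\<^sup>*"
  using assms
proof (induction k)
  case 0 then show ?case by simp
next
  case (Suc k)
  show ?case
  proof (cases "j = Suc k")
    case True then show ?thesis by simp
  next
    case False
    then have "(p ! j, p ! k) \<in> R\<^sup>*" using Suc by auto
    moreover have "(p ! k, p ! Suc k) \<in> R" using Suc False by auto
    ultimately show ?thesis by (rule rtrancl_into_rtrancl)
  qed
qed

lemma cut_identity:
  fixes \<Gamma> :: "('e::finite \<times> 'v::finite) set"
  assumes w: "weights_of \<Gamma> w x" and ab: "(a0, b0) \<in> \<Gamma>"
    and inA: "Inl a0 \<in> A" and notA: "Inr b0 \<notin> A"
    and cl: "\<And>y z. y \<in> A \<Longrightarrow> bip_adj (\<Gamma> - {(a0, b0)}) y z \<Longrightarrow> z \<in> A"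
  shows "(\<Sum>a\<in>{a. Inl a \<in> A}. x $ a) = real (card {b. Inr b \<in> A}) + w (a0, b0)"
proof -
  let ?AE = "{a. Inl a \<in> A}" and ?AV = "{b. Inr b \<in> A}"
  have wz: "\<forall>\<epsilon>. \<epsilon> \<notin> \<Gamma> \<longrightarrow> w \<epsilon> = 0" and rs: "\<forall>v. (\<Sum>e\<in>UNIV. w (e, v)) = 1"
    and xk: "\<forall>k. x $ k = (\<Sum>v\<in>UNIV. w (k, v))" using w by (auto simp: weights_alt)
  have i1: "w (a, v) = 0" if "a \<in> ?AE" "v \<notin> ?AV" "(a, v) \<noteq> (a0, b0)" for a v
  proof (rule ccontr)
    assume "w (a, v) \<noteq> 0"
    then have "(a, v) \<in> \<Gamma>" using wz by blast
    then have "bip_adj (\<Gamma> - {(a0, b0)}) (Inl a) (Inr v)" using that unfolding bip_adj_def by blast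
    then show False using cl that by auto
  qed
  have i2: "w (a, v) = 0" if "a \<notin> ?AE" "v \<in> ?AV" for a v
  proof (rule ccontr)
    assume "w (a, v) \<noteq> 0"
    then have "(a, v) \<in> \<Gamma>" using wz by blast
    moreover have "(a, v) \<noteq> (a0, b0)" using that notA by auto
    ultimately have "bip_adj (\<Gamma> - {(a0, b0)}) (Inr v) (Inl a)" unfolding bip_adj_def by blast
    then show False using cl that by auto
  qed
  have U: "UNIV = ?AV \<union> (- ?AV)" by blast
  have "(\<Sum>a\<in>?AE. x $ a) = (\<Sum>a\<in>?AE. (\<Sum>v\<in>?AV. w (a, v)) + (\<Sum>v\<in>-?AV. w (a, v)))"
    by (rule sum.cong) (simp_all add: xk sum.union_disjoint[symmetric] U[symmetric])
  also have "\<dots> = (\<Sum>a\<in>?AE. \<Sum>v\<in>?AV. w (a, v)) + (\<Sum>a\<in>?AE. \<Sum>v\<in>-?AV. w (a, v))"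
    by (rule sum.distrib)
  also have "(\<Sum>a\<in>?AE. \<Sum>v\<in>-?AV. w (a, v)) = (\<Sum>a\<in>?AE. if a = a0 then w (a0, b0) else 0)"
  proof (rule sum.cong)
    fix a assume a: "a \<in> ?AE"
    have "(\<Sum>v\<in>-?AV. w (a, v)) = (\<Sum>v\<in>-?AV. if v = b0 then (if a = a0 then w (a0, b0) else 0) else 0)"
      by (rule sum.cong) (use i1 a in auto)
    also have "\<dots> = (if a = a0 then w (a0, b0) else 0)" using notA by (simp add: sum.delta)
    finally show "(\<Sum>v\<in>-?AV. w (a, v)) = (if a = a0 then w (a0, b0) else 0)" .
  qed simp
  also have "\<dots> = w (a0, b0)" using inA by (simp add: sum.delta)
  also have "(\<Sum>a\<in>?AE. \<Sum>v\<in>?AV. w (a, v)) = (\<Sum>v\<in>?AV. \<Sum>a\<in>?AE. w (a, v))" by (rule sum.swap)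
  also have "\<dots> = (\<Sum>v\<in>?AV. \<Sum>a\<in>UNIV. w (a, v))"
    by (rule sum.cong, simp, rule sum.mono_neutral_left) (use i2 in auto)
  also have "\<dots> = real (card ?AV)" using rs by simp
  finally show ?thesis .
qed


lemma adj_Inl: "bip_adj \<Gamma> (Inl a) y \<Longrightarrow> \<exists>b. y = Inr b \<and> (a, b) \<in> \<Gamma>"
  unfolding bip_adj_def by auto

lemma adj_Inr: "bip_adj \<Gamma> (Inr b) y \<Longrightarrow> \<exists>a. y = Inl a \<and> (a, b) \<in> \<Gamma>"
  unfolding bip_adj_def by auto

lemma flow_step:
  fixes \<Gamma> :: "('e::finite \<times> 'v::finite) set"
  assumes w: "weights_of \<Gamma> w x" and e1: "(a, b1) \<in> \<Gamma>" and e2: "(a2, b1) \<in> \<Gamma>"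
    and ne: "a \<noteq> a2" and t: "0 \<le> t" "t \<le> w (a, b1)"
  defines "w1 \<equiv> (\<lambda>\<epsilon>. w \<epsilon> + (if \<epsilon> = (a2, b1) then t else 0) - (if \<epsilon> = (a, b1) then t else 0))"
  shows "weights_of \<Gamma> w1 (x + t *\<^sub>R (axis a2 1 - axis a 1))"
proof -
  have wz: "\<forall>\<epsilon>. \<epsilon> \<notin> \<Gamma> \<longrightarrow> w \<epsilon> = 0" and rs: "\<forall>v. (\<Sum>e\<in>UNIV. w (e, v)) = 1"
    and xk: "\<forall>k. x $ k = (\<Sum>v\<in>UNIV. w (k, v))" and nn: "\<forall>\<epsilon>\<in>\<Gamma>. 0 \<le> w \<epsilon>"
    using w by (auto simp: weights_alt)
  have s1: "(\<Sum>e\<in>UNIV. w1 (e, v)) = 1" for v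
    using rs by (cases "v = b1") (simp_all add: w1_def sum.distrib sum_subtractf sum.delta)
  have s2: "(x + t *\<^sub>R (axis a2 1 - axis a 1)) $ k = (\<Sum>v\<in>UNIV. w1 (k, v))" for k
  proof -
    have d: "(\<Sum>v\<in>UNIV. if (k, v) = (c, b1) then t else 0) = (if k = c then t else 0)" for c
      by (cases "k = c") (simp_all add: sum.delta)
    have "(\<Sum>v\<in>UNIV. w1 (k, v)) = x $ k + (if k = a2 then t else 0) - (if k = a then t else 0)"
      unfolding w1_def sum_subtractf sum.distrib d xk[rule_format] ..
    moreover have "(x + t *\<^sub>R (axis a2 1 - axis a 1)) $ k = x $ k + (if k = a2 then t else 0) - (if k = a then t else 0)"
      by (simp add: axis_def)
    ultimately show ?thesis by simp
  qed
  show ?thesis unfolding weights_alt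
  proof (intro conjI allI ballI impI)
    show "0 \<le> w1 \<epsilon>" if "\<epsilon> \<in> \<Gamma>" for \<epsilon>
      using that nn t ne by (auto simp: w1_def)
    show "w1 \<epsilon> = 0" if "\<epsilon> \<notin> \<Gamma>" for \<epsilon>
      using that wz e1 e2 by (cases \<epsilon>) (auto simp: w1_def)
    show "(\<Sum>e\<in>UNIV. w1 (e, v)) = 1" for v by (rule s1)
    show "(x + t *\<^sub>R (axis a2 1 - axis a 1)) $ k = (\<Sum>v\<in>UNIV. w1 (k, v))" for k by (rule s2)
  qed
qed

lemma flow:
  fixes \<Gamma> :: "('e::finite \<times> 'v::finite) set"
  assumes "weights_of \<Gamma> w x" "distinct q" "q \<noteq> []" "hd q = Inl a" "last q = Inl b"
   "\<forall>i. Suc i < length q \<longrightarrow> bip_adj \<Gamma> (q ! i) (q ! Suc i)"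
   "\<forall>i a' b'. Suc i < length q \<longrightarrow> q ! i = Inl a' \<longrightarrow> q ! Suc i = Inr b' \<longrightarrow> t \<le> w (a', b')"
   "0 \<le> t"
  shows "\<exists>w'. weights_of \<Gamma> w' (x + t *\<^sub>R (axis b 1 - axis a 1))"
  using assms
proof (induction "length q" arbitrary: q a w x rule: less_induct)
  case less
  show ?case
  proof (cases q)
    case Nil then show ?thesis using less(4) by simp
  next
    case (Cons h rest)
    then have h: "h = Inl a" using less(5) by simp
    show ?thesis
    proof (cases rest)
      case Nil
      then have "a = b" using less(6) \<open>q = h # rest\<close> h by simp
      then have "x + t *\<^sub>R (axis b 1 - axis a 1) = x" by simp
      then show ?thesis using less(2) by metis
    next
      case (Cons y rest1)
      have qq: "q = Inl a # y # rest1" using \<open>q = h # rest\<close> h Cons by simp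
      have "Suc 0 < length q" using qq by simp
      then have "bip_adj \<Gamma> (q ! 0) (q ! Suc 0)" using less(7) by blast
      then have "bip_adj \<Gamma> (Inl a) y" using qq by simp
      from adj_Inl[OF this] obtain b1 where y: "y = Inr b1" and e1: "(a, b1) \<in> \<Gamma>" by blast
      show ?thesis
      proof (cases rest1)
        case Nil
        then have False using less(6) qq y by simp
        then show ?thesis ..
      next
        case (Cons z rest2)
        have qq2: "q = Inl a # Inr b1 # z # rest2" using qq y Cons by simp
        have "Suc 1 < length q" using qq2 by simp
        then have "bip_adj \<Gamma> (q ! 1) (q ! Suc 1)" using less(7) by blast
        then have "bip_adj \<Gamma> (Inr b1) z" using qq2 by simp
        from adj_Inr[OF this] obtain a2 where z: "z = Inl a2" and e2: "(a2, b1) \<in> \<Gamma>" by blast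
        have q3: "q = Inl a # Inr b1 # Inl a2 # rest2" using qq2 z by simp
        have ne: "a \<noteq> a2" using less(3) q3 by auto
        have "Suc 0 < length q" "q ! 0 = Inl a" "q ! Suc 0 = Inr b1" using q3 by simp_all
        then have tw: "t \<le> w (a, b1)" using less(8) by blast
        define w1 where "w1 \<equiv> (\<lambda>\<epsilon>. w \<epsilon> + (if \<epsilon> = (a2, b1) then t else 0) - (if \<epsilon> = (a, b1) then t else 0))"
        have W1: "weights_of \<Gamma> w1 (x + t *\<^sub>R (axis a2 1 - axis a 1))"
          unfolding w1_def by (rule flow_step[OF less(2) e1 e2 ne less(9) tw])
        let ?q = "Inl a2 # rest2"
        have b1n: "Inr b1 \<notin> set ?q" using less(3) q3 by auto
        have "\<exists>w'. weights_of \<Gamma> w' ((x + t *\<^sub>R (axis a2 1 - axis a 1)) + t *\<^sub>R (axis b 1 - axis a2 1))"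
        proof (rule less(1)[OF _ W1])
          show "length ?q < length q" using q3 by simp
          show "distinct ?q" using less(3) q3 by simp
          show "?q \<noteq> []" by simp
          show "hd ?q = Inl a2" by simp
          show "last ?q = Inl b" using less(6) q3 by simp
          show "\<forall>i. Suc i < length ?q \<longrightarrow> bip_adj \<Gamma> (?q ! i) (?q ! Suc i)"
          proof (intro allI impI)
            fix i assume "Suc i < length ?q"
            then show "bip_adj \<Gamma> (?q ! i) (?q ! Suc i)"
            proof -
              have "Suc (Suc (Suc i)) < length q" using q3 \<open>Suc i < length ?q\<close> by simp
              then have "bip_adj \<Gamma> (q ! Suc (Suc i)) (q ! Suc (Suc (Suc i)))" using less(7) by blast
              then show ?thesis using q3 by simp
            qed
          qed
          show "\<forall>i a' b'. Suc i < length ?q \<longrightarrow> ?q ! i = Inl a' \<longrightarrow> ?q ! Suc i = Inr b' \<longrightarrow> t \<le> w1 (a', b')"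
          proof (intro allI impI)
            fix i a' b' assume i: "Suc i < length ?q" "?q ! i = Inl a'" "?q ! Suc i = Inr b'"
            have "Inr b' \<in> set ?q" using i by (metis nth_mem)
            then have "b' \<noteq> b1" using b1n by auto
            moreover have "t \<le> w (a', b')"
            proof -
              have "Suc (Suc (Suc i)) < length q" "q ! Suc (Suc i) = Inl a'" "q ! Suc (Suc (Suc i)) = Inr b'"
                using q3 i by simp_all
              then show ?thesis using less(8) by blast
            qed
            ultimately show "t \<le> w1 (a', b')" by (simp add: w1_def)
          qed
          show "0 \<le> t" by fact
        qed
        moreover have "(x + t *\<^sub>R (axis a2 1 - axis a 1)) + t *\<^sub>R (axis b 1 - axis a2 1)
            = x + t *\<^sub>R (axis b 1 - axis a 1)" by (simp add: algebra_simps)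
        ultimately show ?thesis by simp
      qed
    qed
  qed
qed


lemma comp_cl:
  assumes "y \<in> {y. (x, y) \<in> (Rel H)\<^sup>*}" "bip_adj H y z"
  shows "z \<in> {y. (x, y) \<in> (Rel H)\<^sup>*}"
  using assms unfolding Rel_def by (auto intro: rtrancl_into_rtrancl)

lemma cut_value:
  fixes \<Gamma> :: "('e::finite \<times> 'v::finite) set"
  assumes st: "spanning_tree G \<Gamma>" and ab: "(a, b) \<in> \<Gamma>" and w: "weights_of \<Gamma> w (fplus f)"
    and Adef: "A = {y. (Inl a, y) \<in> (Rel (\<Gamma> - {(a, b)}))\<^sup>*}"
    and out: "Inl k \<notin> A"
  shows "w (a, b) = real (card {c. Inl c \<in> A}) / real CARD('e)"
proof -
  let ?AE = "{c. Inl c \<in> A}" and ?AV = "{c. Inr c \<in> A}"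
  have inA: "Inl a \<in> A" using Adef by simp
  have notA: "Inr b \<notin> A" using bridge[OF st ab] Adef by simp
  have cl: "z \<in> A" if "y \<in> A" "bip_adj (\<Gamma> - {(a, b)}) y z" for y z
    using comp_cl[of y "Inl a" "\<Gamma> - {(a, b)}" z] that Adef by simp
  have L: "(\<Sum>c\<in>?AE. fplus f $ c) = real (card ?AV) + w (a, b)"
    by (rule cut_identity[OF w ab inA notA cl])
  have "(\<Sum>c\<in>?AE. fplus f $ c) = (\<Sum>c\<in>?AE. real (f c)) + real (card ?AE) * (1 / real CARD('e))"
    by (simp add: fplus_def sum.distrib)
  also have "(\<Sum>c\<in>?AE. real (f c)) = real (\<Sum>c\<in>?AE. f c)" by simp
  finally have E: "w (a, b) = real (\<Sum>c\<in>?AE. f c) - real (card ?AV) + real (card ?AE) / real CARD('e)"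
    using L by simp
  have wz: "\<forall>\<epsilon>. \<epsilon> \<notin> \<Gamma> \<longrightarrow> w \<epsilon> = 0" and rs: "\<forall>v. (\<Sum>e\<in>UNIV. w (e, v)) = 1"
    and nn: "\<forall>\<epsilon>\<in>\<Gamma>. 0 \<le> w \<epsilon>" using w by (auto simp: weights_alt)
  have nn': "0 \<le> w \<epsilon>" for \<epsilon> by (metis nn wz order_refl)
  have w0: "0 \<le> w (a, b)" by (rule nn')
  have w1: "w (a, b) \<le> 1"
  proof -
    have "w (a, b) \<le> (\<Sum>e\<in>UNIV. w (e, b))"
      by (rule member_le_sum) (use nn' in auto)
    then show ?thesis using rs by simp
  qed
  have c1: "1 \<le> card ?AE"
  proof -
    have "a \<in> ?AE" using inA by simp
    then have "?AE \<noteq> {}" by blast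
    then show ?thesis by (simp add: Suc_le_eq card_gt_0_iff)
  qed
  have c2: "card ?AE < CARD('e)"
  proof -
    have "?AE \<subset> UNIV" using out by blast
    then show ?thesis by (rule psubset_card_mono[OF finite])
  qed
  define q where "q = real (card ?AE) / real CARD('e)"
  have q0: "0 < q" using c1 by (simp add: q_def)
  have q1: "q < 1" using c2 by (simp add: q_def)
  define m where "m = int (\<Sum>c\<in>?AE. f c) - int (card ?AV)"
  have "real_of_int m = w (a, b) - q" using E by (simp add: m_def q_def)
  then have "-1 < m" "m < 1" using w0 w1 q0 q1 by linarith+
  then have "m = 0" by simp
  then show ?thesis using E \<open>real_of_int m = w (a, b) - q\<close> by (simp add: q_def)
qed

lemma path_step_avoid:
  assumes d: "distinct p" and adj: "\<forall>i. Suc i < length p \<longrightarrow> bip_adj \<Gamma> (p ! i) (p ! Suc i)"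
    and i: "Suc i < length p" "p ! i = Inl a'" "p ! Suc i = Inr b'"
    and l: "Suc l < length p" "l \<noteq> i"
  shows "(p ! l, p ! Suc l) \<in> Rel (\<Gamma> - {(a', b')})"
proof (rule adj_avoid)
  show "bip_adj \<Gamma> (p ! l) (p ! Suc l)" using adj l by blast
  show "\<not> (p ! l = Inl a' \<and> p ! Suc l = Inr b')"
    using nth_eq_iff_index_eq[OF d, of l i] i l by auto
  show "\<not> (p ! l = Inr b' \<and> p ! Suc l = Inl a')"
    using nth_eq_iff_index_eq[OF d, of l "Suc i"] nth_eq_iff_index_eq[OF d, of "Suc l" i] i l by auto
qed


lemma Rel_diff_adj: "(y, z) \<in> Rel (H - S) \<Longrightarrow> bip_adj H y z"
  unfolding Rel_def bip_adj_def by auto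

theorem lemma4p3:
  fixes G \<Gamma> :: "('e::finite \<times> 'v::finite) set"
    and f g :: "'e \<Rightarrow> nat" and e e' :: 'e and p :: "('e + 'v) list" and v1 :: 'v
  assumes "bip_connected G"
    and "hypertree G f" and "hypertree G g"
    and "e \<noteq> e'"
    and "\<And>x. int (g x) = int (f x) - (if x = e then 1 else 0) + (if x = e' then 1 else 0)"
    and "spanning_tree G \<Gamma>" and "induces \<Gamma> f"
    and "fplus f \<in> rel_interior (Mcell \<Gamma>)"
    and "is_path \<Gamma> p (Inl e) (Inl e')" and "p ! 1 = Inr v1"
  shows "\<exists>t\<in>{0..<1}. (1 - t) *\<^sub>R fplus f + t *\<^sub>R fplus g \<in> Mcell \<Gamma> \<and>
           (\<forall>s\<in>{t<..1}. (1 - s) *\<^sub>R fplus f + s *\<^sub>R fplus g \<notin> Mcell \<Gamma>) \<and>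
           (\<forall>w. weights_of \<Gamma> w ((1 - t) *\<^sub>R fplus f + t *\<^sub>R fplus g) \<longrightarrow> w (e, v1) = 0)"
proof -
  note st = assms(6)
  have pne: "p \<noteq> []" and d: "distinct p" and hd: "hd p = Inl e" and lst: "last p = Inl e'"
    and adj: "\<forall>i. Suc i < length p \<longrightarrow> bip_adj \<Gamma> (p ! i) (p ! Suc i)"
    using assms(9) unfolding is_path_def by auto
  define n where "n = length p"
  have p0: "p ! 0 = Inl e" using hd pne by (simp add: hd_conv_nth)
  have pl: "p ! (n - 1) = Inl e'" using lst pne by (simp add: last_conv_nth n_def)
  have n2: "2 \<le> n"
  proof (rule ccontr)
    assume "\<not> 2 \<le> n"
    moreover have "n \<noteq> 0" using pne by (simp add: n_def)
    ultimately have "n = 1" by arith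
    then show False using p0 pl assms(4) by simp
  qed
  have "bip_adj \<Gamma> (p ! 0) (p ! Suc 0)" using adj n2 by (simp add: n_def)
  then have "bip_adj \<Gamma> (Inl e) (Inr v1)" using p0 assms(10) by simp
  from adj_Inl[OF this] have e1: "(e, v1) \<in> \<Gamma>" by simp
  have edge_facts: "(a', b') \<in> \<Gamma> \<and> (Inl a', Inl e) \<in> (Rel (\<Gamma> - {(a', b')}))\<^sup>* \<and>
      Inl e' \<notin> {y. (Inl a', y) \<in> (Rel (\<Gamma> - {(a', b')}))\<^sup>*}"
    if i: "Suc i < n" "p ! i = Inl a'" "p ! Suc i = Inr b'" for i a' b'
  proof -
    let ?R = "Rel (\<Gamma> - {(a', b')})"
    have "bip_adj \<Gamma> (p ! i) (p ! Suc i)" using adj i(1) unfolding n_def by blast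
    then have "bip_adj \<Gamma> (Inl a') (Inr b')" using i by simp
    from adj_Inl[OF this] have ab: "(a', b') \<in> \<Gamma>" by simp
    have av: "(p ! l, p ! Suc l) \<in> ?R" if "Suc l < n" "l \<noteq> i" for l
      by (rule path_step_avoid[OF d adj]) (use i that in \<open>simp_all add: n_def\<close>)
    have "(p ! 0, p ! i) \<in> ?R\<^sup>*" by (rule seg) (use av i in auto)
    then have r1: "(Inl a', Inl e) \<in> ?R\<^sup>*" using p0 i Rel_rtrancl_sym by metis
    have "(p ! Suc i, p ! (n - 1)) \<in> ?R\<^sup>*" by (rule seg) (use av i in auto)
    then have r2: "(Inr b', Inl e') \<in> ?R\<^sup>*" using pl i by simp
    have "Inl e' \<notin> {y. (Inl a', y) \<in> ?R\<^sup>*}"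
    proof
      assume "Inl e' \<in> {y. (Inl a', y) \<in> ?R\<^sup>*}"
      then have "(Inl a', Inl e') \<in> ?R\<^sup>*" by simp
      moreover have "(Inl e', Inr b') \<in> ?R\<^sup>*" using Rel_rtrancl_sym[OF r2] .
      ultimately have "(Inl a', Inr b') \<in> ?R\<^sup>*" by (rule rtrancl_trans)
      then show False using bridge[OF st ab] by simp
    qed
    then show ?thesis using ab r1 by simp
  qed
  let ?R1 = "Rel (\<Gamma> - {(e, v1)})"
  define A1 where "A1 = {y. (Inl e, y) \<in> ?R1\<^sup>*}"
  have ef1: "Inl e' \<notin> A1" using edge_facts[of 0 e v1] n2 p0 assms(10) by (simp add: A1_def)
  obtain w0 where w0: "weights_of \<Gamma> w0 (fplus f)"
    using Mcell_weights assms(8) rel_interior_subset by blast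
  define c where "c = w0 (e, v1)"
  have cval: "c = real (card {k. Inl k \<in> A1}) / real CARD('e)"
    unfolding c_def by (rule cut_value[OF st e1 w0 A1_def ef1])
  have from1: "(p ! 1, p ! j) \<in> ?R1\<^sup>*" if "1 \<le> j" "j < n" for j
  proof (rule seg)
    show "1 \<le> j" by fact
    fix l assume "1 \<le> l" "l < j"
    then show "(p ! l, p ! Suc l) \<in> ?R1"
      by (intro path_step_avoid[OF d adj, of 0]) (use that n2 p0 assms(10) in \<open>simp_all add: n_def\<close>)
  qed
  have notv1: "(Inl e, Inr v1) \<notin> ?R1\<^sup>*" by (rule bridge[OF st e1])
  have dec: "c \<le> w0 (a', b')" if i: "Suc i < n" "p ! i = Inl a'" "p ! Suc i = Inr b'" for i a' b'
  proof (cases "i = 0")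
    case True
    then have "a' = e" "b' = v1" using i p0 assms(10) by simp_all
    then show ?thesis by (simp add: c_def)
  next
    case False
    let ?R = "Rel (\<Gamma> - {(a', b')})"
    define Ai where "Ai = {y. (Inl a', y) \<in> ?R\<^sup>*}"
    have ef: "(a', b') \<in> \<Gamma>" "(Inl a', Inl e) \<in> ?R\<^sup>*" "Inl e' \<notin> Ai"
      using edge_facts[OF i] by (simp_all add: Ai_def)
    have wv: "w0 (a', b') = real (card {k. Inl k \<in> Ai}) / real CARD('e)"
      by (rule cut_value[OF st ef(1) w0 Ai_def ef(3)])
    have sub: "(Inl e, y) \<in> ?R\<^sup>*" if "(Inl e, y) \<in> ?R1\<^sup>*" for y
      using that
    proof (induction rule: rtrancl_induct)
      case base then show ?case by simp
    next
      case (step y z)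
      have yz: "bip_adj \<Gamma> y z" using step(2) by (rule Rel_diff_adj)
      show ?case
      proof (cases "(y = Inl a' \<and> z = Inr b') \<or> (y = Inr b' \<and> z = Inl a')")
        case False
        have "(y, z) \<in> ?R" by (rule adj_avoid[OF yz]) (use False in auto)
        then show ?thesis by (rule rtrancl_into_rtrancl[OF step(3)])
      next
        case True
        obtain j where j: "y = p ! j" "1 \<le> j" "j < n"
        proof (cases "y = Inl a'")
          case True
          then show ?thesis using that[of i] i False by simp
        next
          case False
          then have "y = Inr b'" using \<open>(y = Inl a' \<and> z = Inr b') \<or> (y = Inr b' \<and> z = Inl a')\<close> by blast
          then show ?thesis using that[of "Suc i"] i by simp
        qed
        have "(p ! 1, y) \<in> ?R1\<^sup>*" using from1[OF j(2,3)] j(1) by simp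
        then have "(y, p ! 1) \<in> ?R1\<^sup>*" by (rule Rel_rtrancl_sym)
        with step(1) have "(Inl e, p ! 1) \<in> ?R1\<^sup>*" by (rule rtrancl_trans)
        then have False using notv1 assms(10) by simp
        then show ?thesis ..
      qed
    qed
    have "{k. Inl k \<in> A1} \<subseteq> {k. Inl k \<in> Ai}"
    proof
      fix k assume "k \<in> {k. Inl k \<in> A1}"
      then have "(Inl e, Inl k) \<in> ?R\<^sup>*" using sub by (simp add: A1_def)
      then have "(Inl a', Inl k) \<in> ?R\<^sup>*" by (rule rtrancl_trans[OF ef(2)])
      then show "k \<in> {k. Inl k \<in> Ai}" by (simp add: Ai_def)
    qed
    then have "card {k. Inl k \<in> A1} \<le> card {k. Inl k \<in> Ai}" by (rule card_mono[OF finite])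
    then show ?thesis unfolding wv cval by (simp add: divide_right_mono)
  qed
  have nn0: "0 \<le> w0 \<epsilon>" if "\<epsilon> \<in> \<Gamma>" for \<epsilon> using w0 that by (simp add: weights_of_def)
  have c0: "0 \<le> c" unfolding c_def by (rule nn0[OF e1])
  have c1: "c < 1"
  proof -
    have "{k. Inl k \<in> A1} \<subset> UNIV" using ef1 by blast
    then have "card {k. Inl k \<in> A1} < CARD('e)" by (rule psubset_card_mono[OF finite])
    then show ?thesis unfolding cval by simp
  qed
  define X where "X t = (1 - t) *\<^sub>R fplus f + t *\<^sub>R fplus g" for t
  have greal: "real (g k) = real (f k) - (if k = e then 1 else 0) + (if k = e' then 1 else 0)" for k
  proof -
    have "real_of_int (int (g k)) = real_of_int (int (f k) - (if k = e then 1 else 0) + (if k = e' then 1 else 0))"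
      using assms(5)[of k] by simp
    then show ?thesis by simp
  qed
  have Xk: "X t $ k = fplus f $ k + t * ((if k = e' then 1 else 0) - (if k = e then 1 else 0))" for t k
    unfolding X_def fplus_def by (simp add: greal algebra_simps)
  have Xc: "X c = fplus f + c *\<^sub>R (axis e' 1 - axis e 1)"
    unfolding vec_eq_iff Xk by (simp add: axis_def)
  have inA1: "Inl e \<in> A1" by (simp add: A1_def)
  have notA1: "Inr v1 \<notin> A1" using notv1 by (simp add: A1_def)
  have cl1: "z \<in> A1" if "y \<in> A1" "bip_adj (\<Gamma> - {(e, v1)}) y z" for y z
    using comp_cl[of y "Inl e" "\<Gamma> - {(e, v1)}" z] that by (simp add: A1_def)
  have eA: "e \<in> {k. Inl k \<in> A1}" using inA1 by simp
  have e'A: "e' \<notin> {k. Inl k \<in> A1}" using ef1 by simp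
  have L0: "(\<Sum>k\<in>{k. Inl k \<in> A1}. fplus f $ k) = real (card {k. Inr k \<in> A1}) + c"
    unfolding c_def by (rule cut_identity[OF w0 e1 inA1 notA1 cl1])
  have key: "w (e, v1) = c - t" if "weights_of \<Gamma> w (X t)" for w t
  proof -
    have L: "(\<Sum>k\<in>{k. Inl k \<in> A1}. X t $ k) = real (card {k. Inr k \<in> A1}) + w (e, v1)"
      by (rule cut_identity[OF that e1 inA1 notA1 cl1])
    let ?S = "{k. Inl k \<in> A1}"
    have "(\<Sum>k\<in>?S. X t $ k) = (\<Sum>k\<in>?S. fplus f $ k) + (\<Sum>k\<in>?S. t * (if k = e' then 1 else 0))
        - (\<Sum>k\<in>?S. t * (if k = e then 1 else 0))"
      unfolding Xk by (simp add: sum.distrib sum_subtractf right_diff_distrib)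
    also have "(\<Sum>k\<in>?S. t * (if k = e' then 1 else 0)) = 0"
      by (rule sum.neutral) (use e'A in auto)
    also have "(\<Sum>k\<in>?S. t * (if k = e then 1 else 0)) = (\<Sum>k\<in>?S. if k = e then t else 0)"
      by (rule sum.cong) auto
    also have "\<dots> = t" using eA by (simp add: sum.delta)
    finally show ?thesis using L L0 by simp
  qed
  have "\<exists>w'. weights_of \<Gamma> w' (fplus f + c *\<^sub>R (axis e' 1 - axis e 1))"
  proof (rule flow[OF w0 d pne hd lst adj _ c0])
    show "\<forall>i a' b'. Suc i < length p \<longrightarrow> p ! i = Inl a' \<longrightarrow> p ! Suc i = Inr b' \<longrightarrow> c \<le> w0 (a', b')"
      using dec by (simp add: n_def)
  qed
  then obtain w' where w': "weights_of \<Gamma> w' (X c)" using Xc by auto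
  have inM: "X c \<in> Mcell \<Gamma>" by (rule weights_Mcell[OF w'])
  have outM: "X s \<notin> Mcell \<Gamma>" if "s \<in> {c<..1}" for s
  proof
    assume "X s \<in> Mcell \<Gamma>"
    then obtain w where w: "weights_of \<Gamma> w (X s)" using Mcell_weights by blast
    then have "w (e, v1) = c - s" by (rule key)
    moreover have "0 \<le> w (e, v1)" using w e1 by (simp add: weights_of_def)
    ultimately show False using that by simp
  qed
  have zero: "w (e, v1) = 0" if "weights_of \<Gamma> w (X c)" for w
    using key[OF that] by simp
  show ?thesis
    using c0 c1 inM outM zero unfolding X_def by (intro bexI[of _ c]) auto
qed

end
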